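(* In the simply typed distributive $\lambda$-calculus, if $\Gamma\vdash t:A$ and $t\to_{\mathsf{dist}} s$, then $\Gamma\vdash s:A$.
   Context: Terms: $t,s,u ::= x \mid \lambda x.t \mid ts \mid \langle t,s\rangle \mid \pi_1 t \mid \pi_2 t$ (up to $\alpha$-renaming); $t\{x:=s\}$ is capture-avoiding substitution. Top-level rules: $(\lambda x.t)s \mapsto t\{x:=s\}$; $\pi_i\langle t_1,t_2\rangle \mapsto t_i$ ($i=1,2$); $\langle t,s\rangle u \mapsto \langle tu, su\rangle$; $\pi_i(\lambda x.t)\mapsto \lambda x.\pi_i t$ ($i=1,2$); $\to_{\mathsf{dist}}$ is the closure of these rules under all term constructors. Types: $A ::= \tau \mid A\Rightarrow A \mid A\wedge A$ with $\tau$ a single atomic type. The relation $\equiv$ on types is the smallest equivalence relation containing $A\Rightarrow (B\wedge C)\equiv (A\Rightarrow B)\wedge(A\Rightarrow C)$ for all $A,B,C$ and closed under congruence for $\Rightarrow$ and $\wedge$ in both arguments. Typing rules: $\Gamma,x:A\vdash x:A$; if $\Gamma\vdash t:A$ and $A\equiv B$ then $\Gamma\vdash t:B$; if $\Gamma,x:A\vdash t:B$ then $\Gamma\vdash \lambda x.t:A\Rightarrow B$; if $\Gamma\vdash t:A\Rightarrow B$ and $\Gamma\vdash s:A$ then $\Gamma\vdash ts:B$; if $\Gamma\vdash t:A$ and $\Gamma\vdash s:B$ then $\Gamma\vdash\langle t,s\rangle:A\wedge B$; if $\Gamma\vdash t:A\wedge B$ then $\Gamma\vdash\pi_1 t:A$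 and $\Gamma\vdash \pi_2 t:B$. *)

theory Defs
  imports Main
begin

datatype trm =
    Var nat
  | Lam trm
  | App trm trm
  | Pair trm trm
  | Proj1 trm
  | Proj2 trm

primrec lift :: "trm \<Rightarrow> nat \<Rightarrow> trm" where
  "lift (Var i) k = (if i < k then Var i else Var (Suc i))"
| "lift (Lam t) k = Lam (lift t (Suc k))"
| "lift (App t s) k = App (lift t k) (lift s k)"
| "lift (Pair t s) k = Pair (lift t k) (lift s k)"
| "lift (Proj1 t) k = Proj1 (lift t k)"
| "lift (Proj2 t) k = Proj2 (lift t k)"

text \<open>Capture-avoiding substitution: subst t s k replaces index k by s in t
  (decrementing free indices above k), as in the beta rule.\<close>
primrec subst :: "trm \<Rightarrow> trm \<Rightarrow> nat \<Rightarrow> trm" where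
  "subst (Var i) s k = (if k < i then Var (i - 1) else if i = k then s else Var i)"
| "subst (Lam t) s k = Lam (subst t (lift s 0) (Suc k))"
| "subst (App t u) s k = App (subst t s k) (subst u s k)"
| "subst (Pair t u) s k = Pair (subst t s k) (subst u s k)"
| "subst (Proj1 t) s k = Proj1 (subst t s k)"
| "subst (Proj2 t) s k = Proj2 (subst t s k)"

inductive dist :: "trm \<Rightarrow> trm \<Rightarrow> bool" (infixl "\<rightarrow>\<^sub>d" 50) where
  beta:  "App (Lam t) s \<rightarrow>\<^sub>d subst t s 0"
| pi1:   "Proj1 (Pair t1 t2) \<rightarrow>\<^sub>d t1"
| pi2:   "Proj2 (Pair t1 t2) \<rightarrow>\<^sub>d t2"
| appd:  "App (Pair t s) u \<rightarrow>\<^sub>d Pair (App t u) (App s u)"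
| pi1l:  "Proj1 (Lam t) \<rightarrow>\<^sub>d Lam (Proj1 t)"
| pi2l:  "Proj2 (Lam t) \<rightarrow>\<^sub>d Lam (Proj2 t)"
| lam:   "t \<rightarrow>\<^sub>d t' \<Longrightarrow> Lam t \<rightarrow>\<^sub>d Lam t'"
| appL:  "t \<rightarrow>\<^sub>d t' \<Longrightarrow> App t s \<rightarrow>\<^sub>d App t' s"
| appR:  "s \<rightarrow>\<^sub>d s' \<Longrightarrow> App t s \<rightarrow>\<^sub>d App t s'"
| pairL: "t \<rightarrow>\<^sub>d t' \<Longrightarrow> Pair t s \<rightarrow>\<^sub>d Pair t' s"
| pairR: "s \<rightarrow>\<^sub>d s' \<Longrightarrow> Pair t s \<rightarrow>\<^sub>d Pair t s'"
| proj1: "t \<rightarrow>\<^sub>d t' \<Longrightarrow> Proj1 t \<rightarrow>\<^sub>d Proj1 t'"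
| proj2: "t \<rightarrow>\<^sub>d t' \<Longrightarrow> Proj2 t \<rightarrow>\<^sub>d Proj2 t'"

datatype ty =
    Atom
  | Fun ty ty  (infixr "\<Rightarrow>\<^sub>t" 200)
  | Conj ty ty (infixr "\<and>\<^sub>t" 210)

inductive ty_equiv :: "ty \<Rightarrow> ty \<Rightarrow> bool" (infix "\<equiv>\<^sub>t" 50) where
  dist_ax: "A \<Rightarrow>\<^sub>t (B \<and>\<^sub>t C) \<equiv>\<^sub>t (A \<Rightarrow>\<^sub>t B) \<and>\<^sub>t (A \<Rightarrow>\<^sub>t C)"
| refl:    "A \<equiv>\<^sub>t A"
| sym:     "A \<equiv>\<^sub>t B \<Longrightarrow> B \<equiv>\<^sub>t A"
| trans:   "A \<equiv>\<^sub>t B \<Longrightarrow> B \<equiv>\<^sub>t C \<Longrightarrow> A \<equiv>\<^sub>t C"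
| cong_fun:  "A \<equiv>\<^sub>t A' \<Longrightarrow> B \<equiv>\<^sub>t B' \<Longrightarrow> A \<Rightarrow>\<^sub>t B \<equiv>\<^sub>t A' \<Rightarrow>\<^sub>t B'"
| cong_conj: "A \<equiv>\<^sub>t A' \<Longrightarrow> B \<equiv>\<^sub>t B' \<Longrightarrow> A \<and>\<^sub>t B \<equiv>\<^sub>t A' \<and>\<^sub>t B'"

definition shift :: "(nat \<Rightarrow> ty) \<Rightarrow> ty \<Rightarrow> (nat \<Rightarrow> ty)" where
  "shift \<Gamma> A = (\<lambda>i. case i of 0 \<Rightarrow> A | Suc j \<Rightarrow> \<Gamma> j)"

inductive typing :: "(nat \<Rightarrow> ty) \<Rightarrow> trm \<Rightarrow> ty \<Rightarrow> bool" ("_ \<turnstile> _ : _" [50, 50, 50] 50) where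
  var:   "\<Gamma> i = A \<Longrightarrow> \<Gamma> \<turnstile> Var i : A"
| equiv: "\<Gamma> \<turnstile> t : A \<Longrightarrow> A \<equiv>\<^sub>t B \<Longrightarrow> \<Gamma> \<turnstile> t : B"
| abs:   "shift \<Gamma> A \<turnstile> t : B \<Longrightarrow> \<Gamma> \<turnstile> Lam t : A \<Rightarrow>\<^sub>t B"
| app:   "\<Gamma> \<turnstile> t : A \<Rightarrow>\<^sub>t B \<Longrightarrow> \<Gamma> \<turnstile> s : A \<Longrightarrow> \<Gamma> \<turnstile> App t s : B"
| pair:  "\<Gamma> \<turnstile> t : A \<Longrightarrow> \<Gamma> \<turnstile> s : B \<Longrightarrow> \<Gamma> \<turnstile> Pair t s : A \<and>\<^sub>t B"
| proj1: "\<Gamma> \<turnstile> t : A \<and>\<^sub>t B \<Longrightarrow> \<Gamma> \<turnstile> Proj1 t : A"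
| proj2: "\<Gamma> \<turnstile> t : A \<and>\<^sub>t B \<Longrightarrow> \<Gamma> \<turnstile> Proj2 t : B"

end

theory Submission
  imports Defs
begin

fun distr :: "ty \<Rightarrow> ty \<Rightarrow> ty" where
  "distr a (Conj b1 b2) = Conj (distr a b1) (distr a b2)"
| "distr a b = Fun a b"

fun nf :: "ty \<Rightarrow> ty" where
  "nf Atom = Atom"
| "nf (Conj a b) = Conj (nf a) (nf b)"
| "nf (Fun a b) = distr (nf a) (nf b)"

lemmas [trans] = ty_equiv.trans

lemma fun_distr: "Fun a b \<equiv>\<^sub>t distr a b"
proof (induction b)
  case (Conj b1 b2)
  have "Fun a (Conj b1 b2) \<equiv>\<^sub>t Conj (Fun a b1) (Fun a b2)" by (rule dist_ax)
  also have "\<dots> \<equiv>\<^sub>t Conj (distr a b1) (distr a b2)" using Conj by (rule cong_conj)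
  finally show ?case by simp
qed (auto intro: ty_equiv.refl)

lemma nf_sound: "A \<equiv>\<^sub>t nf A"
proof (induction A)
  case (Fun a b)
  have "Fun a b \<equiv>\<^sub>t Fun (nf a) (nf b)" using Fun by (rule cong_fun)
  also have "\<dots> \<equiv>\<^sub>t distr (nf a) (nf b)" by (rule fun_distr)
  finally show ?case by simp
qed (auto intro: ty_equiv.refl cong_conj)

lemma nf_complete: "A \<equiv>\<^sub>t B \<Longrightarrow> nf A = nf B"
  by (induction rule: ty_equiv.induct) auto

lemma equiv_iff: "A \<equiv>\<^sub>t B \<longleftrightarrow> nf A = nf B"
proof
  assume "nf A = nf B"
  then show "A \<equiv>\<^sub>t B"
    by (metis nf_sound ty_equiv.sym ty_equiv.trans)
qed (rule nf_complete)

lemma distr_inj: "distr a b = distr a' b' \<Longrightarrow> a = a' \<and> b = b'"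
proof (induction b arbitrary: b')
  case (Conj b1 b2)
  then show ?case by (cases b') auto
next
  case Atom then show ?case by (cases b') auto
next
  case (Fun x y) then show ?case by (cases b') auto
qed

lemma distr_conj: "distr a b = Conj c1 c2 \<Longrightarrow> \<exists>b1 b2. b = Conj b1 b2 \<and> c1 = distr a b1 \<and> c2 = distr a b2"
  by (cases b) auto

lemma fun_equiv_inv: "Fun A B \<equiv>\<^sub>t Fun A' B' \<Longrightarrow> A \<equiv>\<^sub>t A' \<and> B \<equiv>\<^sub>t B'"
  by (auto simp: equiv_iff dest: distr_inj)

lemma conj_equiv_inv: "Conj A B \<equiv>\<^sub>t Conj A' B' \<Longrightarrow> A \<equiv>\<^sub>t A' \<and> B \<equiv>\<^sub>t B'"
  by (auto simp: equiv_iff)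

lemma fun_conj_equiv: "Fun A B \<equiv>\<^sub>t Conj C1 C2 \<Longrightarrow>
   \<exists>b1 b2. B \<equiv>\<^sub>t Conj b1 b2 \<and> C1 \<equiv>\<^sub>t Fun A b1 \<and> C2 \<equiv>\<^sub>t Fun A b2"
proof -
  assume "Fun A B \<equiv>\<^sub>t Conj C1 C2"
  then have "distr (nf A) (nf B) = Conj (nf C1) (nf C2)" by (auto dest: nf_complete)
  then obtain b1 b2 where b: "nf B = Conj b1 b2" "nf C1 = distr (nf A) b1" "nf C2 = distr (nf A) b2"
    using distr_conj by blast
  have "B \<equiv>\<^sub>t Conj b1 b2" using b(1) nf_sound by metis
  moreover have "C1 \<equiv>\<^sub>t Fun A b1"
  proof -
    have "C1 \<equiv>\<^sub>t nf C1" by (rule nf_sound)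
    also have "\<dots> = distr (nf A) b1" by (rule b(2))
    also have "\<dots> \<equiv>\<^sub>t Fun (nf A) b1" by (rule ty_equiv.sym[OF fun_distr])
    also have "\<dots> \<equiv>\<^sub>t Fun A b1" by (rule cong_fun[OF ty_equiv.sym[OF nf_sound] ty_equiv.refl])
    finally show ?thesis .
  qed
  moreover have "C2 \<equiv>\<^sub>t Fun A b2"
  proof -
    have "C2 \<equiv>\<^sub>t nf C2" by (rule nf_sound)
    also have "\<dots> = distr (nf A) b2" by (rule b(3))
    also have "\<dots> \<equiv>\<^sub>t Fun (nf A) b2" by (rule ty_equiv.sym[OF fun_distr])
    also have "\<dots> \<equiv>\<^sub>t Fun A b2" by (rule cong_fun[OF ty_equiv.sym[OF nf_sound] ty_equiv.refl])
    finally show ?thesis .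
  qed
  ultimately show ?thesis by blast
qed

lemma gen_lam: "\<Gamma> \<turnstile> Lam t : D \<Longrightarrow> \<exists>A B. (shift \<Gamma> A \<turnstile> t : B) \<and> Fun A B \<equiv>\<^sub>t D"
proof (induction \<Gamma> "Lam t" D rule: typing.induct)
  case (equiv \<Gamma> A B) then show ?case by (metis ty_equiv.trans)
qed (auto intro: ty_equiv.refl)

lemma gen_app: "\<Gamma> \<turnstile> App t s : D \<Longrightarrow> \<exists>A B. (\<Gamma> \<turnstile> t : Fun A B) \<and> (\<Gamma> \<turnstile> s : A) \<and> B \<equiv>\<^sub>t D"
proof (induction \<Gamma> "App t s" D rule: typing.induct)
  case (equiv \<Gamma> A B) then show ?case by (metis ty_equiv.trans)
qed (auto intro: ty_equiv.refl)

lemma gen_pair: "\<Gamma> \<turnstile> Pair t s : D \<Longrightarrow> \<exists>A B. (\<Gamma> \<turnstile> t : A) \<and> (\<Gamma> \<turnstile> s : B) \<and> Conj A B \<equiv>\<^sub>t D"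
proof (induction \<Gamma> "Pair t s" D rule: typing.induct)
  case (equiv \<Gamma> A B) then show ?case by (metis ty_equiv.trans)
qed (auto intro: ty_equiv.refl)

lemma gen_proj1: "\<Gamma> \<turnstile> Proj1 t : D \<Longrightarrow> \<exists>A B. (\<Gamma> \<turnstile> t : Conj A B) \<and> A \<equiv>\<^sub>t D"
proof (induction \<Gamma> "Proj1 t" D rule: typing.induct)
  case (equiv \<Gamma> A B) then show ?case by (metis ty_equiv.trans)
qed (auto intro: ty_equiv.refl)

lemma gen_proj2: "\<Gamma> \<turnstile> Proj2 t : D \<Longrightarrow> \<exists>A B. (\<Gamma> \<turnstile> t : Conj A B) \<and> B \<equiv>\<^sub>t D"
proof (induction \<Gamma> "Proj2 t" D rule: typing.induct)
  case (equiv \<Gamma> A B) then show ?case by (metis ty_equiv.trans)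
qed (auto intro: ty_equiv.refl)

lemma ctx_equiv: "\<Gamma> \<turnstile> t : B \<Longrightarrow> (\<And>i. \<Delta> i \<equiv>\<^sub>t \<Gamma> i) \<Longrightarrow> \<Delta> \<turnstile> t : B"
proof (induction arbitrary: \<Delta> rule: typing.induct)
  case (var \<Gamma> i A)
  then show ?case by (metis typing.var typing.equiv)
next
  case (abs \<Gamma> A t B)
  have "\<And>i. shift \<Delta> A i \<equiv>\<^sub>t shift \<Gamma> A i"
    using abs.prems by (auto simp: shift_def intro: ty_equiv.refl split: nat.split)
  then show ?case using abs.IH by (auto intro: typing.abs)
next
  case (equiv \<Gamma> t A B) then show ?case by (metis typing.equiv)
next
  case (app \<Gamma> t A B s) then show ?case by (metis typing.app)
next
  case (pair \<Gamma> t A s B) then show ?case by (metis typing.pair)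
next
  case (proj1 \<Gamma> t A B) then show ?case by (metis typing.proj1)
next
  case (proj2 \<Gamma> t A B) then show ?case by (metis typing.proj2)
qed

definition ins :: "(nat \<Rightarrow> ty) \<Rightarrow> nat \<Rightarrow> ty \<Rightarrow> nat \<Rightarrow> ty" where
  "ins \<Gamma> k A = (\<lambda>i. if i < k then \<Gamma> i else if i = k then A else \<Gamma> (i - 1))"

lemma shift_ins0: "shift \<Gamma> A = ins \<Gamma> 0 A"
  by (auto simp: shift_def ins_def split: nat.split)

lemma shift_ins: "shift (ins \<Gamma> k A) C = ins (shift \<Gamma> C) (Suc k) A"
  by (auto simp: shift_def ins_def split: nat.split)

lemma lift_typing: "\<Gamma> \<turnstile> t : B \<Longrightarrow> ins \<Gamma> k A \<turnstile> lift t k : B"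
proof (induction arbitrary: k rule: typing.induct)
  case (var \<Gamma> i A)
  then show ?case by (auto simp: ins_def intro!: typing.var)
next
  case (abs \<Gamma> A t B)
  then show ?case by (auto simp: shift_ins intro!: typing.abs)
next
  case (equiv \<Gamma> t A B) then show ?case by (metis typing.equiv)
next
  case (app \<Gamma> t A B s) then show ?case by (simp, metis typing.app)
next
  case (pair \<Gamma> t A s B) then show ?case by (simp, metis typing.pair)
next
  case (proj1 \<Gamma> t A B) then show ?case by (simp, metis typing.proj1)
next
  case (proj2 \<Gamma> t A B) then show ?case by (simp, metis typing.proj2)
qed

lemma subst_typing: "\<Delta> \<turnstile> t : B \<Longrightarrow> \<Delta> = ins \<Gamma> k A \<Longrightarrow> \<Gamma> \<turnstile> s : A \<Longrightarrow> \<Gamma> \<turnstile> subst t s k : B"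
proof (induction arbitrary: \<Gamma> k s rule: typing.induct)
  case (var \<Delta> i B)
  then show ?case by (auto simp: ins_def intro!: typing.var)
next
  case (abs \<Delta> C t B)
  have "shift \<Gamma> C \<turnstile> lift s 0 : A" using abs.prems(2) lift_typing[of \<Gamma> s A 0 C]
    by (simp add: shift_ins0)
  then show ?case using abs by (auto simp: shift_ins intro!: typing.abs)
next
  case (equiv \<Delta> t C B) then show ?case by (metis typing.equiv)
next
  case (app \<Delta> t C B u) then show ?case by (simp, metis typing.app)
next
  case (pair \<Delta> t C u B) then show ?case by (simp, metis typing.pair)
next
  case (proj1 \<Delta> t C B) then show ?case by (simp, metis typing.proj1)
next
  case (proj2 \<Delta> t C B) then show ?case by (simp, metis typing.proj2)
qed

theorem theorem3:
  assumes "\<Gamma> \<turnstile> t : A" and "t \<rightarrow>\<^sub>d s"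
  shows "\<Gamma> \<turnstile> s : A"
  using assms(2,1)
proof (induction arbitrary: \<Gamma> A rule: dist.induct)
  case (beta t s)
  obtain C B where 1: "\<Gamma> \<turnstile> Lam t : Fun C B" "\<Gamma> \<turnstile> s : C" "B \<equiv>\<^sub>t A"
    using gen_app[OF beta] by blast
  obtain C' B' where 2: "shift \<Gamma> C' \<turnstile> t : B'" "Fun C' B' \<equiv>\<^sub>t Fun C B"
    using gen_lam[OF 1(1)] by blast
  have 3: "C' \<equiv>\<^sub>t C" "B' \<equiv>\<^sub>t B" using fun_equiv_inv[OF 2(2)] by auto
  have "shift \<Gamma> C \<turnstile> t : B'"
    by (rule ctx_equiv[OF 2(1)]) (auto simp: shift_def intro: ty_equiv.refl ty_equiv.sym[OF 3(1)] split: nat.split)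
  then have "\<Gamma> \<turnstile> subst t s 0 : B'"
    using subst_typing 1(2) by (simp add: shift_ins0)
  then show ?case by (metis typing.equiv 3(2) 1(3) ty_equiv.trans)
next
  case (pi1 t1 t2)
  obtain C D where 1: "\<Gamma> \<turnstile> Pair t1 t2 : Conj C D" "C \<equiv>\<^sub>t A" using gen_proj1[OF pi1] by blast
  obtain C' D' where 2: "\<Gamma> \<turnstile> t1 : C'" "Conj C' D' \<equiv>\<^sub>t Conj C D" using gen_pair[OF 1(1)] by blast
  show ?case using 1 2 conj_equiv_inv by (metis typing.equiv ty_equiv.trans)
next
  case (pi2 t1 t2)
  obtain C D where 1: "\<Gamma> \<turnstile> Pair t1 t2 : Conj C D" "D \<equiv>\<^sub>t A" using gen_proj2[OF pi2] by blast
  obtain C' D' where 2: "\<Gamma> \<turnstile> t2 : D'" "Conj C' D' \<equiv>\<^sub>t Conj C D" using gen_pair[OF 1(1)] by blast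
  show ?case using 1 2 conj_equiv_inv by (metis typing.equiv ty_equiv.trans)
next
  case (appd t s u)
  obtain C B where 1: "\<Gamma> \<turnstile> Pair t s : Fun C B" "\<Gamma> \<turnstile> u : C" "B \<equiv>\<^sub>t A"
    using gen_app[OF appd] by blast
  obtain A1 A2 where 2: "\<Gamma> \<turnstile> t : A1" "\<Gamma> \<turnstile> s : A2" "Conj A1 A2 \<equiv>\<^sub>t Fun C B"
    using gen_pair[OF 1(1)] by blast
  obtain b1 b2 where 3: "B \<equiv>\<^sub>t Conj b1 b2" "A1 \<equiv>\<^sub>t Fun C b1" "A2 \<equiv>\<^sub>t Fun C b2"
    using fun_conj_equiv[OF ty_equiv.sym[OF 2(3)]] by blast
  have "\<Gamma> \<turnstile> App t u : b1" using 2(1) 3(2) 1(2) by (metis typing.equiv typing.app)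
  moreover have "\<Gamma> \<turnstile> App s u : b2" using 2(2) 3(3) 1(2) by (metis typing.equiv typing.app)
  ultimately have "\<Gamma> \<turnstile> Pair (App t u) (App s u) : Conj b1 b2" by (rule typing.pair)
  then show ?case using 3(1) 1(3) by (metis typing.equiv ty_equiv.trans ty_equiv.sym)
next
  case (pi1l t)
  obtain C D where 1: "\<Gamma> \<turnstile> Lam t : Conj C D" "C \<equiv>\<^sub>t A" using gen_proj1[OF pi1l] by blast
  obtain C' B' where 2: "shift \<Gamma> C' \<turnstile> t : B'" "Fun C' B' \<equiv>\<^sub>t Conj C D"
    using gen_lam[OF 1(1)] by blast
  obtain b1 b2 where 3: "B' \<equiv>\<^sub>t Conj b1 b2" "C \<equiv>\<^sub>t Fun C' b1" "D \<equiv>\<^sub>t Fun C' b2"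
    using fun_conj_equiv[OF 2(2)] by blast
  have "shift \<Gamma> C' \<turnstile> t : Conj b1 b2" using 2(1) 3(1) by (rule typing.equiv)
  then have "\<Gamma> \<turnstile> Lam (Proj1 t) : Fun C' b1" by (metis typing.proj1 typing.abs)
  then show ?case using 3(2) 1(2) by (metis typing.equiv ty_equiv.trans ty_equiv.sym)
next
  case (pi2l t)
  obtain C D where 1: "\<Gamma> \<turnstile> Lam t : Conj C D" "D \<equiv>\<^sub>t A" using gen_proj2[OF pi2l] by blast
  obtain C' B' where 2: "shift \<Gamma> C' \<turnstile> t : B'" "Fun C' B' \<equiv>\<^sub>t Conj C D"
    using gen_lam[OF 1(1)] by blast
  obtain b1 b2 where 3: "B' \<equiv>\<^sub>t Conj b1 b2" "C \<equiv>\<^sub>t Fun C' b1" "D \<equiv>\<^sub>t Fun C' b2"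
    using fun_conj_equiv[OF 2(2)] by blast
  have "shift \<Gamma> C' \<turnstile> t : Conj b1 b2" using 2(1) 3(1) by (rule typing.equiv)
  then have "\<Gamma> \<turnstile> Lam (Proj2 t) : Fun C' b2" by (metis typing.proj2 typing.abs)
  then show ?case using 3(3) 1(2) by (metis typing.equiv ty_equiv.trans ty_equiv.sym)
next
  case (lam t t')
  obtain C B where "shift \<Gamma> C \<turnstile> t : B" "Fun C B \<equiv>\<^sub>t A" using gen_lam[OF lam.prems] by blast
  then show ?case using lam.IH by (metis typing.abs typing.equiv)
next
  case (appL t t' s)
  obtain C B where "\<Gamma> \<turnstile> t : Fun C B" "\<Gamma> \<turnstile> s : C" "B \<equiv>\<^sub>t A" using gen_app[OF appL.prems] by blast
  then show ?case using appL.IH by (metis typing.app typing.equiv)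
next
  case (appR s s' t)
  obtain C B where "\<Gamma> \<turnstile> t : Fun C B" "\<Gamma> \<turnstile> s : C" "B \<equiv>\<^sub>t A" using gen_app[OF appR.prems] by blast
  then show ?case using appR.IH by (metis typing.app typing.equiv)
next
  case (pairL t t' s)
  obtain C B where "\<Gamma> \<turnstile> t : C" "\<Gamma> \<turnstile> s : B" "Conj C B \<equiv>\<^sub>t A" using gen_pair[OF pairL.prems] by blast
  then show ?case using pairL.IH by (metis typing.pair typing.equiv)
next
  case (pairR s s' t)
  obtain C B where "\<Gamma> \<turnstile> t : C" "\<Gamma> \<turnstile> s : B" "Conj C B \<equiv>\<^sub>t A" using gen_pair[OF pairR.prems] by blast
  then show ?case using pairR.IH by (metis typing.pair typing.equiv)
next
  case (proj1 t t')
  obtain C B where "\<Gamma> \<turnstile> t : Conj C B" "C \<equiv>\<^sub>t A" using gen_proj1[OF proj1.prems] by blast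
  then show ?case using proj1.IH by (metis typing.proj1 typing.equiv)
next
  case (proj2 t t')
  obtain C B where "\<Gamma> \<turnstile> t : Conj C B" "B \<equiv>\<^sub>t A" using gen_proj2[OF proj2.prems] by blast
  then show ?case using proj2.IH by (metis typing.proj2 typing.equiv)
qed

end
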